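(* Let $(\mathbf{i},\mathbf{a})\in I^m\times\mathbb{Z}^m$ be an integral pair and let $\pi_{\mathbf{a}}\in S_m$ be the shortest permutation such that $\pi_{\mathbf{a}}(\mathbf{a})$ is weakly increasing with respect to the preorder $\preceq$. Then $\pi_{\mathbf{a}}$ is $(\mathbf{i},\mathbf{a})$-admissible.
   Context: $I$ is the vertex set of a finite simple bipartite graph $I=I_{\bar0}\sqcup I_{\bar1}$ (parities $0,1$); every edge is oriented from its even endpoint to its odd endpoint, and $i\leftarrow j$ means there is an oriented edge from $j$ to $i$. $(\mathbf{i},\mathbf{a})$ is integral if each $a_k$ is an integer whose residue mod 2 equals the parity of $i_k$. The preorder $\preceq$ on $\mathbb{Z}$ is $a\preceq b$ iff $\lfloor a/2\rfloor\le\lfloor b/2\rfloor$. $S_m$ acts on tuples by $\pi(\mathbf{a})=(a_{\pi^{-1}(1)},\dots,a_{\pi^{-1}(m)})$. Distinct indices $k,l$ are not $(\mathbf{i},\mathbf{a})$-switchable if $i_k\leftarrow i_l$ and $a_k=a_l+1$ (checked for the pair in either order); $\pi$ is $(\mathbf{i},\mathbf{a})$-admissible if for every non-switchable pair $k,l$, $\pi(k),\pi(l)$ are in the same relative order as $k,l$. *)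

theory Defs
  imports Complex_Main "HOL-Combinatorics.Permutations"
begin

(* Finite simple bipartite graph on vertex set V with parity p : V -> {0,1};
   the parts are I_0 = {v. p v = 0} and I_1 = {v. p v = 1}. *)
definition bipartite_graph :: "'v set \<Rightarrow> ('v \<Rightarrow> 'v \<Rightarrow> bool) \<Rightarrow> ('v \<Rightarrow> int) \<Rightarrow> bool" where
  "bipartite_graph V E p \<longleftrightarrow> finite V
     \<and> (\<forall>v\<in>V. p v \<in> {0, 1})
     \<and> (\<forall>u v. E u v \<longrightarrow> u \<in> V \<and> v \<in> V)
     \<and> (\<forall>u v. E u v \<longrightarrow> E v u)
     \<and> (\<forall>v. \<not> E v v)
     \<and> (\<forall>u v. E u v \<longrightarrow> p u \<noteq> p v)"

(* i <- j : there is an oriented edge from j to i (edges go even -> odd) *)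
definition arrow :: "('v \<Rightarrow> 'v \<Rightarrow> bool) \<Rightarrow> ('v \<Rightarrow> int) \<Rightarrow> 'v \<Rightarrow> 'v \<Rightarrow> bool" where
  "arrow E p i j \<longleftrightarrow> E j i \<and> p j = 0 \<and> p i = 1"

(* (i,a) integral; tuples are lists indexed 0..m-1 *)
definition integral_pair :: "'v set \<Rightarrow> ('v \<Rightarrow> int) \<Rightarrow> 'v list \<Rightarrow> int list \<Rightarrow> bool" where
  "integral_pair V p is as \<longleftrightarrow> length is = length as \<and> set is \<subseteq> V
     \<and> (\<forall>k < length as. as ! k mod 2 = p (is ! k))"

definition preceq :: "int \<Rightarrow> int \<Rightarrow> bool" where
  "preceq a b \<longleftrightarrow> \<lfloor>real_of_int a / 2\<rfloor> \<le> \<lfloor>real_of_int b / 2\<rfloor>"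

definition act :: "(nat \<Rightarrow> nat) \<Rightarrow> 'a list \<Rightarrow> 'a list" where
  "act \<pi> xs = permute_list (inv \<pi>) xs"

(* Coxeter length of a permutation of {0..<m}: number of inversions *)
definition perm_length :: "nat \<Rightarrow> (nat \<Rightarrow> nat) \<Rightarrow> nat" where
  "perm_length m \<pi> = card {(k, l). k < l \<and> l < m \<and> \<pi> l < \<pi> k}"

definition not_switchable :: "('v \<Rightarrow> 'v \<Rightarrow> bool) \<Rightarrow> ('v \<Rightarrow> int) \<Rightarrow> 'v list \<Rightarrow> int list \<Rightarrow> nat \<Rightarrow> nat \<Rightarrow> bool" where
  "not_switchable E p is as k l \<longleftrightarrow>
     (arrow E p (is ! k) (is ! l) \<and> as ! k = as ! l + 1) \<or>
     (arrow E p (is ! l) (is ! k) \<and> as ! l = as ! k + 1)"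

definition admissible :: "('v \<Rightarrow> 'v \<Rightarrow> bool) \<Rightarrow> ('v \<Rightarrow> int) \<Rightarrow> 'v list \<Rightarrow> int list \<Rightarrow> (nat \<Rightarrow> nat) \<Rightarrow> bool" where
  "admissible E p is as \<pi> \<longleftrightarrow>
     (\<forall>k < length as. \<forall>l < length as. k \<noteq> l \<and> not_switchable E p is as k l
        \<longrightarrow> (\<pi> k < \<pi> l \<longleftrightarrow> k < l))"

end

theory Submission
  imports Defs
begin

lemma preceq_div: "preceq a b \<longleftrightarrow> a div 2 \<le> b div 2"
  unfolding preceq_def using floor_divide_of_int_eq[of a 2] floor_divide_of_int_eq[of b 2]
  by (metis of_int_numeral)

lemma sorted_act_iff:
  assumes "\<pi> permutes {..<m}" "length as = m"
  shows "sorted_wrt preceq (act \<pi> as) \<longleftrightarrow>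
    (\<forall>k<m. \<forall>l<m. \<pi> k < \<pi> l \<longrightarrow> preceq (as!k) (as!l))"
proof -
  have ip: "inv \<pi> permutes {..<length as}" using assms permutes_inv by blast
  have nth: "act \<pi> as ! i = as ! inv \<pi> i" if "i < m" for i
    unfolding act_def using permute_list_nth[OF ip] that assms by simp
  have len: "length (act \<pi> as) = m" unfolding act_def using assms by simp
  have b: "\<pi> k < m" if "k < m" for k using permutes_in_image[OF assms(1), of k] that
    by simp
  have iv: "inv \<pi> (\<pi> k) = k" for k using assms(1) permutes_inverses(2) by fastforce
  have iv2: "inv \<pi> i < m" if "i<m" for i using permutes_in_image[OF ip, of i] that assms(2)
    by simp
  have pv: "\<pi> (inv \<pi> i) = i" for i using assms(1) permutes_inverses(1) by fastforce
  show ?thesis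
    unfolding sorted_wrt_iff_nth_less len
  proof safe
    fix k l assume H: "\<forall>i j. i < j \<longrightarrow> j < m \<longrightarrow> preceq (act \<pi> as ! i) (act \<pi> as ! j)"
      and "k < m" "l < m" "\<pi> k < \<pi> l"
    then show "preceq (as!k) (as!l)" using H[rule_format, of "\<pi> k" "\<pi> l"] nth b iv by simp
  next
    fix i j assume H: "\<forall>k<m. \<forall>l<m. \<pi> k < \<pi> l \<longrightarrow> preceq (as ! k) (as ! l)"
      and "i < j" "j < m"
    then show "preceq (act \<pi> as ! i) (act \<pi> as ! j)"
      using H[rule_format, of "inv \<pi> i" "inv \<pi> j"] nth iv2 pv by simp
  qed
qed

theorem lemma5p9:
  fixes V :: "'v set" and E :: "'v \<Rightarrow> 'v \<Rightarrow> bool" and p :: "'v \<Rightarrow> int"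
    and "is" :: "'v list" and as :: "int list" and m :: nat and \<pi> :: "nat \<Rightarrow> nat"
  assumes "bipartite_graph V E p"
    and "length is = m" and "length as = m"
    and "integral_pair V p is as"
    and "\<pi> permutes {..<m}"
    and "sorted_wrt preceq (act \<pi> as)"
    and "\<forall>\<sigma>. \<sigma> permutes {..<m} \<and> sorted_wrt preceq (act \<sigma> as)
           \<longrightarrow> perm_length m \<pi> \<le> perm_length m \<sigma>"
  shows "admissible E p is as \<pi>"
proof -
  define g where "g k = as ! k div 2" for k
  define rel where "rel k l \<longleftrightarrow> g k < g l \<or> (g k = g l \<and> k < l)" for k l
  define S where "S k = {j. j < m \<and> rel j k}" for k
  define r where "r k = card (S k)" for k
  define \<sigma> where "\<sigma> k = (if k < m then r k else k)" for k
  have pre: "preceq (as!k) (as!l) \<longleftrightarrow> g k \<le> g l" for k l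
    by (simp add: preceq_div g_def)
  have fin: "finite (S k)" for k unfolding S_def by simp
  have mono: "r k < r l" if "l < m" "k < m" "rel k l" for k l
  proof -
    have "S k \<subset> S l"
    proof
      show "S k \<subseteq> S l" using that unfolding S_def rel_def by auto
      show "S k \<noteq> S l" using that unfolding S_def rel_def by auto
    qed
    then show ?thesis unfolding r_def using fin psubset_card_mono by blast
  qed
  have tot: "rel k l \<or> rel l k" if "k \<noteq> l" for k l
    using that unfolding rel_def by auto
  have rless: "r k < m" if "k < m" for k
  proof -
    have "S k \<subseteq> {..<m} - {k}" unfolding S_def rel_def by auto
    then have "card (S k) \<le> card ({..<m} - {k})" by (intro card_mono) auto
    then show ?thesis using that unfolding r_def by simp
  qed
  have inj: "inj_on \<sigma> {..<m}"
    unfolding inj_on_def \<sigma>_def using mono tot by (metis lessThan_iff less_irrefl)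
  have img: "\<sigma> ` {..<m} = {..<m}"
  proof -
    have "\<sigma> ` {..<m} \<subseteq> {..<m}" using rless by (auto simp: \<sigma>_def)
    moreover have "card (\<sigma> ` {..<m}) = card {..<m}" using inj card_image by blast
    ultimately show ?thesis by (simp add: card_subset_eq)
  qed
  have sp: "\<sigma> permutes {..<m}"
  proof (rule bij_imp_permutes)
    show "bij_betw \<sigma> {..<m} {..<m}" using inj img by (simp add: bij_betw_def)
  qed (simp add: \<sigma>_def)
  have \<sigma>ord: "\<sigma> k < \<sigma> l \<longleftrightarrow> rel k l" if "k<m" "l<m" for k l
    using mono tot that unfolding \<sigma>_def
    by (metis less_asym less_irrefl)
  have ssort: "sorted_wrt preceq (act \<sigma> as)"
    unfolding sorted_act_iff[OF sp assms(3)] pre using \<sigma>ord rel_def by auto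
  have psort: "\<forall>k<m. \<forall>l<m. \<pi> k < \<pi> l \<longrightarrow> g k \<le> g l"
    using assms(6) unfolding sorted_act_iff[OF assms(5) assms(3)] pre by blast
  have pinj: "\<pi> k \<noteq> \<pi> l" if "k \<noteq> l" for k l
    using assms(5) that by (metis permutes_inj injD)
  define Inv where "Inv f = {(k, l). k < l \<and> l < m \<and> f l < f k}" for f :: "nat \<Rightarrow> nat"
  have finI: "finite (Inv f)" for f
    by (rule finite_subset[of _ "{..<m} \<times> {..<m}"]) (auto simp: Inv_def)
  have sub: "Inv \<sigma> \<subseteq> Inv \<pi>"
  proof
    fix x assume "x \<in> Inv \<sigma>"
    then obtain k l where x: "x = (k,l)" "k < l" "l < m" "\<sigma> l < \<sigma> k" unfolding Inv_def by auto
    then have "g l < g k" using \<sigma>ord[of l k] unfolding rel_def by auto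
    moreover have "\<pi> k \<noteq> \<pi> l" using pinj x by simp
    moreover have "k < m" using x by simp
    moreover have "\<not> (\<pi> k < \<pi> l)" using psort[rule_format, of k l] x(3) \<open>g l < g k\<close> \<open>k < m\<close> by linarith
    ultimately have "\<pi> l < \<pi> k" by simp
    then show "x \<in> Inv \<pi>" using x unfolding Inv_def by auto
  qed
  show ?thesis
    unfolding admissible_def
  proof (intro allI impI, elim conjE)
    fix k l assume k: "k < length as" and l: "l < length as" and ne: "k \<noteq> l"
      and ns: "not_switchable E p is as k l"
    have ip: "as ! k mod 2 = p (is ! k)" "as ! l mod 2 = p (is ! l)"
      using assms(4) k l unfolding integral_pair_def by auto
    have aux: "x div 2 = y div 2" if "x mod 2 = 1" "x = y + 1" for x y :: int
      using that by presburger
    have geq: "g k = g l"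
    proof (cases "arrow E p (is ! k) (is ! l) \<and> as ! k = as ! l + 1")
      case True
      then show ?thesis using ip aux[of "as!k" "as!l"] unfolding arrow_def g_def by auto
    next
      case False
      then have "arrow E p (is ! l) (is ! k) \<and> as ! l = as ! k + 1"
        using ns unfolding not_switchable_def by blast
      then show ?thesis using ip aux[of "as!l" "as!k"] unfolding arrow_def g_def by auto
    qed
    show "\<pi> k < \<pi> l \<longleftrightarrow> k < l"
    proof (rule ccontr)
      assume bad: "\<not> (\<pi> k < \<pi> l \<longleftrightarrow> k < l)"
      define a where "a = min k l"
      define b where "b = max k l"
      have ab: "(a, b) \<in> Inv \<pi>" using bad ne k l assms(3) pinj[OF ne]
        unfolding Inv_def a_def b_def by (auto simp: min_def max_def)
      have "(a, b) \<notin> Inv \<sigma>" using \<sigma>ord[of a b] geq k l assms(3) ne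
        unfolding Inv_def a_def b_def rel_def by (auto simp: min_def max_def)
      then have "Inv \<sigma> \<subset> Inv \<pi>" using sub ab by blast
      then have "card (Inv \<sigma>) < card (Inv \<pi>)" using finI psubset_card_mono by blast
      moreover have "perm_length m \<pi> \<le> perm_length m \<sigma>" using assms(7) sp ssort by blast
      ultimately show False unfolding perm_length_def Inv_def by simp
    qed
  qed
qed

end
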